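(* For every oriented virtual knot diagram $K$, $\gamma(K)=a+(2k)t$ for some integers $a$ and $k$; that is, the coefficient of $t$ in $\gamma(K)$ is even.
   Context: For an oriented virtual knot diagram $K$ and a classical crossing $c$ with sign $sgn(c)\in\{\pm1\}$, let $K_c$ be the two-component oriented virtual link diagram obtained by smoothing $c$ in the orientation-respecting way. Let $L(K_c)$ be the sum of the signs of all classical crossings of $K_c$ at which the two strands belong to different components, and $\bar L(K_c)=L(K_c)\bmod 2\in\{0,1\}$. Define $\gamma(K)=\sum_{c} t^{\bar L(K_c)}\,sgn(c)$, summing over all classical crossings, an element of the free $\mathbb{Z}$-module on $\{1,t\}$. *)

theory Defs
  imports Main
begin

(* An oriented virtual knot diagram is encoded by its Gauss diagram:
   a cyclic Gauss word w (read along the orientation of the knot), each entry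
   (c, b) meaning the knot passes through classical crossing c, as over-strand
   if b = True and as under-strand if b = False; and a sign function s. *)

definition crossings :: "(nat \<times> bool) list \<Rightarrow> nat set" where
  "crossings w = fst ` set w"

definition gauss_diagram :: "(nat \<times> bool) list \<Rightarrow> (nat \<Rightarrow> int) \<Rightarrow> bool" where
  "gauss_diagram w s \<longleftrightarrow>
     (\<forall>c \<in> crossings w.
        length (filter (\<lambda>x. x = (c, True)) w) = 1 \<and>
        length (filter (\<lambda>x. x = (c, False)) w) = 1 \<and>
        (s c = 1 \<or> s c = -1))"

(* position i lies on the arc strictly between the two passages through c;
   smoothing c splits the knot into this arc and the complementary arc *)
definition in_arc :: "(nat \<times> bool) list \<Rightarrow> nat \<Rightarrow> nat \<Rightarrow> bool" where
  "in_arc w c i \<longleftrightarrow> (\<exists>j<i. fst (w ! j) = c) \<and> (\<exists>k. i < k \<and> k < length w \<and> fst (w ! k) = c)"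

(* crossing d of K_c has its two strands on different components *)
definition separated :: "(nat \<times> bool) list \<Rightarrow> nat \<Rightarrow> nat \<Rightarrow> bool" where
  "separated w c d \<longleftrightarrow> card {i. i < length w \<and> fst (w ! i) = d \<and> in_arc w c i} = 1"

definition smoothing_L :: "(nat \<times> bool) list \<Rightarrow> (nat \<Rightarrow> int) \<Rightarrow> nat \<Rightarrow> int" where
  "smoothing_L w s c = (\<Sum>d \<in> crossings w - {c}. if separated w c d then s d else 0)"

(* gamma(K) in the free Z-module on {1, t}, as (coefficient of 1, coefficient of t) *)
definition gamma :: "(nat \<times> bool) list \<Rightarrow> (nat \<Rightarrow> int) \<Rightarrow> int \<times> int" where
  "gamma w s =
    ((\<Sum>c \<in> crossings w. if smoothing_L w s c mod 2 = 0 then s c else 0),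
     (\<Sum>c \<in> crossings w. if smoothing_L w s c mod 2 = 1 then s c else 0))"

end

theory Submission
  imports Defs
begin

definition pos :: "(nat \<times> bool) list \<Rightarrow> nat \<Rightarrow> nat set" where
  "pos w c = {i. i < length w \<and> fst (w ! i) = c}"

lemma card1_pos:
  assumes "length (filter (\<lambda>x. x = a) w) = 1"
  obtains i where "{i. i < length w \<and> w ! i = a} = {i}"
proof -
  have "card {i. i < length w \<and> w ! i = a} = 1"
    using assms by (simp add: length_filter_conv_card)
  then show ?thesis using that card_1_singletonE by metis
qed

lemma posA:
  assumes g: "gauss_diagram w s" and c: "c \<in> crossings w"
  shows "\<exists>p1 p2. p1 < p2 \<and> pos w c = {p1, p2}"
proof -
  from g c have h1: "length (filter (\<lambda>x. x = (c, True)) w) = 1"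
    and h2: "length (filter (\<lambda>x. x = (c, False)) w) = 1"
    unfolding gauss_diagram_def by auto
  obtain i1 where i1: "{i. i < length w \<and> w ! i = (c, True)} = {i1}" using card1_pos[OF h1] by blast
  obtain i2 where i2: "{i. i < length w \<and> w ! i = (c, False)} = {i2}" using card1_pos[OF h2] by blast
  have "pos w c = {i. i < length w \<and> w ! i = (c, True)} \<union> {i. i < length w \<and> w ! i = (c, False)}"
  proof -
    have e: "fst x = c \<longleftrightarrow> x = (c, True) \<or> x = (c, False)" for x :: "nat \<times> bool"
    proof (cases x)
      case (Pair a b) then show ?thesis by (cases b) auto
    qed
    show ?thesis unfolding pos_def using e by blast
  qed
  hence P: "pos w c = {i1, i2}" using i1 i2 by auto
  have "w ! i1 = (c, True)" using i1 by blast
  moreover have "w ! i2 = (c, False)" using i2 by blast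
  ultimately have "i1 \<noteq> i2" by auto
  show ?thesis
  proof (cases "i1 < i2")
    case True then show ?thesis using P by blast
  next
    case False then have "i2 < i1" using \<open>i1 \<noteq> i2\<close> by simp
    then show ?thesis using P by blast
  qed
qed

lemma arcB:
  assumes P: "pos w c = {p1, p2}" and lt: "p1 < p2"
  shows "in_arc w c i \<longleftrightarrow> p1 < i \<and> i < p2"
proof
  assume "in_arc w c i"
  then obtain j k where j: "j < i" "fst (w ! j) = c" and k: "i < k" "k < length w" "fst (w ! k) = c"
    unfolding in_arc_def by blast
  have "j \<in> pos w c" "k \<in> pos w c" using j k unfolding pos_def by auto
  then show "p1 < i \<and> i < p2" using P lt j k by auto
next
  assume a: "p1 < i \<and> i < p2"
  have "p1 \<in> pos w c" "p2 \<in> pos w c" using P by auto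
  then show "in_arc w c i" using a unfolding in_arc_def pos_def by auto
qed

lemma card_two:
  assumes "q1 \<noteq> q2"
  shows "card {i. (i = q1 \<or> i = q2) \<and> P i} = 1 \<longleftrightarrow> (P q1 \<noteq> P q2)"
proof -
  consider "P q1" "P q2" | "P q1" "\<not> P q2" | "\<not> P q1" "P q2" | "\<not> P q1" "\<not> P q2" by blast
  then show ?thesis
  proof cases
    case 1 then have "{i. (i = q1 \<or> i = q2) \<and> P i} = {q1, q2}" by auto
    then show ?thesis using assms 1 by simp
  next
    case 2 then have "{i. (i = q1 \<or> i = q2) \<and> P i} = {q1}" by auto
    then show ?thesis using 2 by simp
  next
    case 3 then have "{i. (i = q1 \<or> i = q2) \<and> P i} = {q2}" by auto
    then show ?thesis using 3 by simp
  next
    case 4 then have "{i. (i = q1 \<or> i = q2) \<and> P i} = {}" by auto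
    then have "card {i. (i = q1 \<or> i = q2) \<and> P i} = 0" by (simp only: card.empty)
    then show ?thesis using 4 by (metis zero_neq_one)
  qed
qed

lemma sepC:
  assumes Pc: "pos w c = {p1, p2}" and lp: "p1 < p2"
    and Pd: "pos w d = {q1, q2}" and lq: "q1 < q2"
  shows "separated w c d \<longleftrightarrow> ((p1 < q1 \<and> q1 < p2) \<noteq> (p1 < q2 \<and> q2 < p2))"
proof -
  have "{i. i < length w \<and> fst (w ! i) = d \<and> in_arc w c i} = {i. (i = q1 \<or> i = q2) \<and> (p1 < i \<and> i < p2)}"
    using Pd arcB[OF Pc lp] unfolding pos_def by blast
  then show ?thesis unfolding separated_def using card_two[of q1 q2] lq by simp
qed

lemma interlace:
  fixes p1 p2 q1 q2 :: nat
  assumes "p1 < p2" "q1 < q2" "p1 \<noteq> q1" "p1 \<noteq> q2" "p2 \<noteq> q1" "p2 \<noteq> q2"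
  shows "((p1 < q1 \<and> q1 < p2) \<noteq> (p1 < q2 \<and> q2 < p2)) = ((q1 < p1 \<and> p1 < q2) \<noteq> (q1 < p2 \<and> p2 < q2))"
  using assms by arith

lemma sep_sym:
  assumes g: "gauss_diagram w s" and c: "c \<in> crossings w" and d: "d \<in> crossings w" and cd: "c \<noteq> d"
  shows "separated w c d = separated w d c"
proof -
  obtain p1 p2 where Pc: "pos w c = {p1, p2}" "p1 < p2" using posA[OF g c] by blast
  obtain q1 q2 where Pd: "pos w d = {q1, q2}" "q1 < q2" using posA[OF g d] by blast
  have "pos w c \<inter> pos w d = {}" using cd unfolding pos_def by auto
  hence d4: "p1 \<noteq> q1" "p1 \<noteq> q2" "p2 \<noteq> q1" "p2 \<noteq> q2" using Pc Pd by auto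
  show ?thesis unfolding sepC[OF Pc Pd] sepC[OF Pd Pc] by (rule interlace[OF Pc(2) Pd(2) d4])
qed

lemma even_double_sum:
  fixes f :: "nat \<Rightarrow> nat \<Rightarrow> int"
  assumes fin: "finite C" and sym: "\<And>c d. c \<in> C \<Longrightarrow> d \<in> C \<Longrightarrow> f c d = f d c"
  shows "even (\<Sum>c\<in>C. \<Sum>d\<in>C - {c}. f c d)"
proof -
  have split: "(\<Sum>d\<in>C - {c}. f c d) = (\<Sum>d\<in>{d\<in>C. d < c}. f c d) + (\<Sum>d\<in>{d\<in>C. c < d}. f c d)" for c
  proof -
    have "C - {c} = {d\<in>C. d < c} \<union> {d\<in>C. c < d}" by auto
    hence "(\<Sum>d\<in>C - {c}. f c d) = (\<Sum>d\<in>{d\<in>C. d < c} \<union> {d\<in>C. c < d}. f c d)" by simp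
    also have "\<dots> = (\<Sum>d\<in>{d\<in>C. d < c}. f c d) + (\<Sum>d\<in>{d\<in>C. c < d}. f c d)"
      by (rule sum.union_disjoint) (use fin in auto)
    finally show ?thesis .
  qed
  have "(\<Sum>c\<in>C. \<Sum>d\<in>{d\<in>C. c < d}. f c d) = (\<Sum>d\<in>C. \<Sum>c\<in>{c\<in>C. c < d}. f c d)"
    by (rule sum.swap_restrict[OF fin fin])
  also have "\<dots> = (\<Sum>d\<in>C. \<Sum>c\<in>{c\<in>C. c < d}. f d c)"
  proof (rule sum.cong[OF refl], rule sum.cong[OF refl])
    fix d c assume "d \<in> C" "c \<in> {c\<in>C. c < d}"
    then show "f c d = f d c" using sym by auto
  qed
  finally have eq: "(\<Sum>c\<in>C. \<Sum>d\<in>{d\<in>C. c < d}. f c d) = (\<Sum>c\<in>C. \<Sum>d\<in>{d\<in>C. d < c}. f c d)" .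
  have "(\<Sum>c\<in>C. \<Sum>d\<in>C - {c}. f c d) = (\<Sum>c\<in>C. \<Sum>d\<in>{d\<in>C. d < c}. f c d) + (\<Sum>c\<in>C. \<Sum>d\<in>{d\<in>C. c < d}. f c d)"
    by (simp add: split sum.distrib)
  also have "\<dots> = 2 * (\<Sum>c\<in>C. \<Sum>d\<in>{d\<in>C. d < c}. f c d)" using eq by simp
  finally show ?thesis by simp
qed

theorem mainTheorem2:
  fixes w :: "(nat \<times> bool) list" and s :: "nat \<Rightarrow> int"
  assumes "gauss_diagram w s"
  shows "\<exists>a k :: int. gamma w s = (a, 2 * k)"
proof -
  let ?C = "crossings w"
  have fin: "finite ?C" unfolding crossings_def by simp
  have sc: "s c mod 2 = 1" if "c \<in> ?C" for c
    using assms that unfolding gauss_diagram_def by auto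
  let ?L = "smoothing_L w s"
  let ?f = "\<lambda>c d. if separated w c d then (1::int) else 0"
  have L2: "?L c mod 2 = (\<Sum>d\<in>?C - {c}. ?f c d) mod 2" for c
  proof -
    have "?L c mod 2 = (\<Sum>d\<in>?C - {c}. (if separated w c d then s d else 0) mod 2) mod 2"
      unfolding smoothing_L_def by (simp add: mod_sum_eq)
    also have "\<dots> = (\<Sum>d\<in>?C - {c}. ?f c d mod 2) mod 2"
    proof (rule arg_cong[where f="\<lambda>x. x mod 2"], rule sum.cong[OF refl])
      fix d assume "d \<in> ?C - {c}"
      then show "(if separated w c d then s d else 0) mod 2 = ?f c d mod 2"
        using sc[of d] by (cases "separated w c d") simp_all
    qed
    also have "\<dots> = (\<Sum>d\<in>?C - {c}. ?f c d) mod 2" by (simp add: mod_sum_eq)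
    finally show ?thesis .
  qed
  let ?T = "\<Sum>c\<in>?C. if ?L c mod 2 = 1 then s c else 0"
  have "?T mod 2 = (\<Sum>c\<in>?C. (if ?L c mod 2 = 1 then s c else 0) mod 2) mod 2"
    by (simp add: mod_sum_eq)
  also have "\<dots> = (\<Sum>c\<in>?C. ?L c mod 2) mod 2"
  proof (rule arg_cong[where f="\<lambda>x. x mod 2"], rule sum.cong[OF refl])
    fix c assume "c \<in> ?C"
    then show "(if ?L c mod 2 = 1 then s c else 0) mod 2 = ?L c mod 2"
    proof -
      have a: "s c mod 2 = 1" using sc \<open>c \<in> ?C\<close> by blast
      have "?L c mod 2 = 0 \<or> ?L c mod 2 = 1" by presburger
      then show ?thesis using a by auto
    qed
  qed
  also have "\<dots> = (\<Sum>c\<in>?C. (\<Sum>d\<in>?C - {c}. ?f c d) mod 2) mod 2"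
    using L2 by simp
  also have "\<dots> = (\<Sum>c\<in>?C. \<Sum>d\<in>?C - {c}. ?f c d) mod 2" by (simp add: mod_sum_eq)
  also have "\<dots> = 0"
  proof -
    have "even (\<Sum>c\<in>?C. \<Sum>d\<in>?C - {c}. ?f c d)"
    proof -
      have "(\<Sum>c\<in>?C. \<Sum>d\<in>?C - {c}. ?f c d) = (\<Sum>c\<in>?C. \<Sum>d\<in>?C - {c}. (if c = d then 0 else ?f c d))"
        by (intro sum.cong) auto
      also have "even \<dots>"
        by (rule even_double_sum[OF fin]) (use sep_sym[OF assms] in auto)
      finally show ?thesis .
    qed
    then show ?thesis by simp
  qed
  finally have "even ?T" by presburger
  then obtain k where "?T = 2 * k" by blast
  then show ?thesis unfolding gamma_def by auto
qed

end
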